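(* Let $\{c_n\}_{n\ge1}$ be a real sequence with $\sum_{n=1}^\infty|c_n|<+\infty$, and for $n\ge1$ let $\varphi_*^{(n)}(x):=\varphi^{(n)}(x)-\frac12$, $x\in[0,1]$. Let $a<b$ be positive integers. Then for every real $\lambda$, $$\int_0^1\exp\left(\lambda\max_{a\le N\le b}\left|\sum_{n=N}^\infty c_n\varphi_*^{(n)}(x)\right|\right)dx\le 8\exp\left\{\frac{\lambda^2}{2}\sum_{n=a}^\infty (c_n)^2\right\}.$$
   Context: The tent map on $[0,1]$ is $\varphi(x)=2x$ for $x\in[0,1/2]$ and $\varphi(x)=2(1-x)$ for $x\in[1/2,1]$; it is extended to $\mathbb{R}$ by $\varphi(x):=\varphi(x-[x])$, and $\varphi^{(n)}$ denotes the $n$-fold iterate of $\varphi$, so that $\varphi^{(n)}(x)=\varphi(2^{n-1}x)$. *)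

theory Defs
  imports "HOL-Analysis.Analysis"
begin

definition tent01 :: "real \<Rightarrow> real" where
  "tent01 x = (if x \<le> 1/2 then 2 * x else 2 * (1 - x))"

definition tent :: "real \<Rightarrow> real" where
  "tent x = tent01 (x - of_int \<lfloor>x\<rfloor>)"

definition tent_iter :: "nat \<Rightarrow> real \<Rightarrow> real" where
  "tent_iter n = (tent ^^ n)"

definition tent_star :: "nat \<Rightarrow> real \<Rightarrow> real" where
  "tent_star n x = tent_iter n x - 1/2"

end

theory Submission
  imports Defs "HOL-Probability.Hoeffding"
begin

lemma tent_eq: "x \<in> {0..1} \<Longrightarrow> tent x = tent01 x"
proof -
  assume x: "x \<in> {0..1}"
  show ?thesis
  proof (cases "x = 1")
    case True then show ?thesis by (simp add: tent_def tent01_def)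
  next
    case False
    with x have "\<lfloor>x\<rfloor> = 0" by (intro floor_unique) auto
    then show ?thesis by (simp add: tent_def)
  qed
qed

lemma tent_range: "x \<in> {0..1} \<Longrightarrow> tent x \<in> {0..1}"
  by (simp add: tent_eq tent01_def)

lemma tent_iter_Suc0: "tent_iter (Suc n) x = tent (tent_iter n x)"
  by (simp add: tent_iter_def)

lemma tent_iter_range: "x \<in> {0..1} \<Longrightarrow> tent_iter n x \<in> {0..1}"
proof (induction n)
  case 0 then show ?case by (simp add: tent_iter_def)
next
  case (Suc n) then show ?case by (metis tent_iter_Suc0 tent_range)
qed

lemma tent_iter_Suc: "tent_iter (Suc n) x = tent (tent_iter n x)"
  by (simp add: tent_iter_def)

lemma tent_iter_Suc': "tent_iter (Suc n) x = tent_iter n (tent x)"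
  by (simp add: tent_iter_def funpow_Suc_right del: funpow.simps)

lemma tent_iter_add: "tent_iter m (tent_iter n x) = tent_iter (m + n) x"
  by (simp add: tent_iter_def funpow_add)

lemma tent_half: "u \<in> {0..1} \<Longrightarrow> tent (u/2) = u"
  by (simp add: tent_eq tent01_def)

lemma tent_half': "u \<in> {0..1} \<Longrightarrow> tent (1 - u/2) = u"
  by (simp add: tent_eq tent01_def)

lemma cont_tent01: "continuous_on UNIV tent01"
proof -
  have *: "tent01 = (\<lambda>x. min (2*x) (2*(1-x)))"
    by (auto simp: tent01_def fun_eq_iff min_def)
  show ?thesis by (subst *) (intro continuous_intros)
qed

lemma cont_tent: "continuous_on {0..1} tent"
  using continuous_on_subset[OF cont_tent01] continuous_on_cong[of "{0..1}" "{0..1}" tent tent01]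
  by (simp add: tent_eq)

lemma cont_tent_iter: "continuous_on {0..1} (tent_iter n)"
proof (induction n)
  case 0 then show ?case by (simp add: tent_iter_def continuous_on_id)
next
  case (Suc n)
  have "continuous_on {0..1} (tent \<circ> tent_iter n)"
    by (rule continuous_on_compose[OF Suc]) (rule continuous_on_subset[OF cont_tent], auto intro: tent_iter_range)
  then show ?case by (simp add: comp_def tent_iter_Suc[abs_def])
qed

lemma cont_comp_tent_iter: "continuous_on {0..1} h \<Longrightarrow> continuous_on {0..1} (\<lambda>x. h (tent_iter n x))"
  by (rule continuous_on_compose2[OF _ cont_tent_iter]) (auto intro: tent_iter_range)

lemma cont_comp_tent: "continuous_on {0..1} h \<Longrightarrow> continuous_on {0..1} (\<lambda>x. h (tent x))"
  by (rule continuous_on_compose2[OF _ cont_tent]) (auto intro: tent_range)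


lemma split_int:
  fixes F :: "real \<Rightarrow> real"
  assumes F: "continuous_on {0..1} F"
  shows "integral {0..1} F = integral {0..1} (\<lambda>u. (F (u/2) + F (1 - u/2)) / 2)"
proof -
  have h1: "((\<lambda>u. (1/2) *\<^sub>R F (u/2)) has_integral integral {0/2..1/2} F) {0..1}"
    by (rule has_integral_substitution[where c=0 and d=1, OF _ _ _ F])
       (auto intro!: derivative_eq_intros)
  have h2: "((\<lambda>u. (-1/2) *\<^sub>R F (1 - u/2)) has_integral
      (integral {1 - 0/2..1 - 1/2} F - integral {1 - 1/2..1 - 0/2} F)) {0..1}"
    by (rule has_integral_substitution_general[where c=0 and d=1 and s="{}", OF _ _ _ F])
       (auto intro!: derivative_eq_intros continuous_intros)
  have "((\<lambda>u. (1/2) *\<^sub>R F (u/2) - (-1/2) *\<^sub>R F (1 - u/2)) has_integral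
      (integral {0..1/2} F + integral {1/2..1} F)) {0..1}"
    using has_integral_diff[OF h1 h2] by simp
  moreover have "integral {0..1/2} F + integral {1/2..1} F = integral {0..1} F"
    by (rule Henstock_Kurzweil_Integration.integral_combine)
       (auto intro: integrable_continuous_interval F)
  ultimately have "((\<lambda>u. (F (u/2) + F (1 - u/2)) / 2) has_integral integral {0..1} F) {0..1}"
    by (simp add: field_simps)
  then show ?thesis by (rule integral_unique[symmetric])
qed

lemma split_int2:
  fixes g k :: "real \<Rightarrow> real"
  assumes g: "continuous_on {0..1} g" and k: "continuous_on {0..1} k"
  shows "integral {0..1} (\<lambda>y. g (tent y) * k y) = integral {0..1} (\<lambda>u. g u * ((k (u/2) + k (1 - u/2)) / 2))"
proof -
  have c: "continuous_on {0..1} (\<lambda>y. g (tent y) * k y)"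
    by (intro continuous_intros cont_comp_tent g k)
  have "integral {0..1} (\<lambda>y. g (tent y) * k y) =
      integral {0..1} (\<lambda>u. (g (tent (u/2)) * k (u/2) + g (tent (1 - u/2)) * k (1 - u/2)) / 2)"
    by (rule split_int[OF c])
  also have "\<dots> = integral {0..1} (\<lambda>u. g u * ((k (u/2) + k (1 - u/2)) / 2))"
  proof (intro integral_cong)
    fix u :: real assume u: "u \<in> {0..1}"
    show "(g (tent (u/2)) * k (u/2) + g (tent (1 - u/2)) * k (1 - u/2)) / 2 = g u * ((k (u/2) + k (1 - u/2)) / 2)"
      unfolding tent_half[OF u] tent_half'[OF u] by (simp add: algebra_simps)
  qed
  finally show ?thesis .
qed

lemma pres_int:
  fixes h :: "real \<Rightarrow> real"
  assumes h: "continuous_on {0..1} h"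
  shows "integral {0..1} (\<lambda>y. h (tent_iter n y)) = integral {0..1} h"
  using h
proof (induction n arbitrary: h)
  case 0 then show ?case by (simp add: tent_iter_def)
next
  case (Suc n)
  have "integral {0..1} (\<lambda>y. h (tent_iter (Suc n) y)) = integral {0..1} (\<lambda>y. h (tent_iter n (tent y)) * (\<lambda>_. 1) y)"
    by (simp add: tent_iter_Suc')
  also have "\<dots> = integral {0..1} (\<lambda>u. h (tent_iter n u) * (((\<lambda>_. 1) (u/2) + (\<lambda>_. 1::real) (1 - u/2)) / 2))"
    by (rule split_int2) (auto intro: cont_comp_tent_iter Suc.prems)
  also have "\<dots> = integral {0..1} h"
    using Suc.IH[OF Suc.prems] by simp
  finally show ?case .
qed

lemma comb_int:
  fixes g k :: "real \<Rightarrow> real"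
  assumes g: "continuous_on {0..1} g" and k: "continuous_on {0..1} k"
  shows "integral {0..1} (\<lambda>y. g (tent_iter (Suc N) y) * k (tent_iter N y)) =
         integral {0..1} (\<lambda>u. g u * ((k (u/2) + k (1 - u/2)) / 2))"
proof -
  have "integral {0..1} (\<lambda>y. g (tent_iter (Suc N) y) * k (tent_iter N y)) =
        integral {0..1} (\<lambda>y. (\<lambda>z. g (tent z) * k z) (tent_iter N y))"
    by (simp add: tent_iter_Suc0)
  also have "\<dots> = integral {0..1} (\<lambda>z. g (tent z) * k z)"
    by (rule pres_int) (intro continuous_intros cont_comp_tent g k)
  also have "\<dots> = integral {0..1} (\<lambda>u. g u * ((k (u/2) + k (1 - u/2)) / 2))"
    by (rule split_int2[OF g k])
  finally show ?thesis .
qed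

lemma cosh_le: "(exp (s::real) + exp (-s)) / 2 \<le> exp (s^2/2)"
proof -
  define h where "h = 2 * \<bar>s\<bar>"
  have "-h * (1/2) + ln (1 + (1/2) * (exp h - 1)) \<le> h^2/8"
    using Hoeffdings_lemma_aux[of h "1/2"] by (simp add: h_def)
  hence "ln ((1 + exp h)/2) \<le> h^2/8 + h/2" by (simp add: field_simps)
  hence "(1 + exp h)/2 \<le> exp (h^2/8 + h/2)"
    by (metis add_pos_pos exp_gt_zero exp_le_cancel_iff exp_ln divide_pos_pos zero_less_one zero_less_numeral)
  hence "(1 + exp h)/2 * exp (-h/2) \<le> exp (h^2/8 + h/2) * exp (-h/2)"
    by (intro mult_right_mono) auto
  hence "(exp (-h/2) + exp (h/2))/2 \<le> exp (h^2/8)"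
    by (simp add: field_simps flip: exp_add)
  moreover have "h^2/8 = s^2/2" by (simp add: h_def power2_eq_square)
  moreover have "exp (-h/2) + exp (h/2) = exp s + exp (-s)"
    by (cases "s \<ge> 0") (auto simp: h_def)
  ultimately show ?thesis by simp
qed


definition TK :: "(nat \<Rightarrow> real) \<Rightarrow> nat \<Rightarrow> nat \<Rightarrow> real \<Rightarrow> real" where
  "TK c K N x = (\<Sum>n\<in>{N..K}. c n * tent_star n x)"

definition RR :: "(nat \<Rightarrow> real) \<Rightarrow> nat \<Rightarrow> nat \<Rightarrow> nat \<Rightarrow> real \<Rightarrow> real" where
  "RR c K M j u = (\<Sum>n\<in>{j..K}. c n * (tent_iter (n - M) u - 1/2))"

lemma RR_TK: "M \<le> j \<Longrightarrow> RR c K M j (tent_iter M x) = TK c K j x"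
  unfolding RR_def TK_def tent_star_def
  by (intro sum.cong refl) (simp add: tent_iter_add)

lemma cont_RR: "continuous_on {0..1} (RR c K M j)"
  unfolding RR_def[abs_def]
  by (intro continuous_intros continuous_on_sum cont_tent_iter)

lemma cont_TK: "continuous_on {0..1} (TK c K j)"
  unfolding TK_def[abs_def] tent_star_def
  by (intro continuous_intros continuous_on_sum cont_tent_iter)

lemma TK_step: "N \<le> K \<Longrightarrow> TK c K N x = c N * tent_star N x + TK c K (Suc N) x"
  unfolding TK_def by (simp add: sum.atLeast_Suc_atMost)

lemma cont_Max:
  fixes f :: "'i \<Rightarrow> real \<Rightarrow> real"
  assumes "finite J" "J \<noteq> {}" "\<And>j. j \<in> J \<Longrightarrow> continuous_on S (f j)"
  shows "continuous_on S (\<lambda>x. Max ((\<lambda>j. f j x) ` J))"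
  using assms
proof (induction J rule: finite_ne_induct)
  case (singleton j) then show ?case by simp
next
  case (insert j J)
  have "continuous_on S (\<lambda>x. max (f j x) (Max ((\<lambda>j. f j x) ` J)))"
    using insert by (intro continuous_on_max) auto
  moreover have "\<And>x. Max ((\<lambda>j. f j x) ` insert j J) = max (f j x) (Max ((\<lambda>j. f j x) ` J))"
    using insert by (simp add: Max_insert)
  ultimately show ?case by simp
qed

lemma int_exp_TK:
  assumes "N \<le> Suc K"
  shows "integral {0..1} (\<lambda>x. exp (mu * TK c K N x)) \<le> exp (mu^2/8 * (\<Sum>n\<in>{N..K}. (c n)^2))"
  using assms
proof (induction N rule: inc_induct)
  case base
  then show ?case by (simp add: TK_def)
next
  case (step n)
  hence nK: "n \<le> K" by simp
  define g where "g u = exp (mu * RR c K (Suc n) (Suc n) u)" for u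
  define k where "k z = exp (mu * c n * (z - 1/2))" for z
  define B where "B = exp (mu^2 * (c n)^2 / 8)"
  have cg: "continuous_on {0..1} g" unfolding g_def[abs_def]
    by (intro continuous_intros cont_RR)
  have ck: "continuous_on {0..1} k" unfolding k_def[abs_def]
    by (intro continuous_intros)
  have "integral {0..1} (\<lambda>x. exp (mu * TK c K n x)) =
        integral {0..1} (\<lambda>x. g (tent_iter (Suc n) x) * k (tent_iter n x))"
    by (intro integral_cong)
       (simp add: g_def k_def RR_TK TK_step[OF nK] tent_star_def algebra_simps flip: exp_add)
  also have "\<dots> = integral {0..1} (\<lambda>u. g u * ((k (u/2) + k (1 - u/2)) / 2))"
    by (rule comb_int[OF cg ck])
  also have "\<dots> \<le> integral {0..1} (\<lambda>u. g u * B)"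
  proof (rule integral_le)
    show "(\<lambda>u. g u * ((k (u/2) + k (1 - u/2)) / 2)) integrable_on {0..1}"
      by (intro integrable_continuous_interval continuous_intros cg
           continuous_on_compose2[OF ck]) auto
    show "(\<lambda>u. g u * B) integrable_on {0..1}"
      by (intro integrable_continuous_interval continuous_intros cg)
    fix u :: real assume u: "u \<in> {0..1}"
    define s where "s = mu * c n * (u/2 - 1/2)"
    have ks: "k (u/2) = exp s" "k (1 - u/2) = exp (-s)"
      by (simp_all add: k_def s_def algebra_simps)
    have u0: "0 \<le> u * (2 - u)" using u by simp
    have "(u/2 - 1/2)^2 \<le> 1/4" using u0 by (simp add: power2_eq_square field_simps)
    hence "s^2 \<le> (mu * c n)^2 * (1/4)"
      unfolding s_def power_mult_distrib by (intro mult_left_mono) auto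
    hence "s^2/2 \<le> mu^2 * (c n)^2 / 8" by (simp add: power_mult_distrib)
    hence "(k (u/2) + k (1 - u/2)) / 2 \<le> B"
      unfolding ks B_def using cosh_le[of s] by (meson exp_le_cancel_iff order_trans)
    then show "g u * ((k (u/2) + k (1 - u/2)) / 2) \<le> g u * B"
      by (intro mult_left_mono) (auto simp: g_def)
  qed
  also have "\<dots> = integral {0..1} g * B" by simp
  also have "integral {0..1} g = integral {0..1} (\<lambda>x. g (tent_iter (Suc n) x))"
    by (rule pres_int[OF cg, symmetric])
  also have "\<dots> = integral {0..1} (\<lambda>x. exp (mu * TK c K (Suc n) x))"
    by (intro integral_cong) (simp add: g_def RR_TK)
  also have "\<dots> * B \<le> exp (mu^2/8 * (\<Sum>n\<in>{Suc n..K}. (c n)^2)) * B"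
    by (intro mult_right_mono step.IH) (auto simp: B_def)
  also have "\<dots> = exp (mu^2/8 * (\<Sum>n\<in>{n..K}. (c n)^2))"
    by (simp add: B_def sum.atLeast_Suc_atMost[OF nK] algebra_simps flip: exp_add)
  finally show ?case .
qed


lemma doob_path:
  fixes x :: "nat \<Rightarrow> real"
  assumes "a \<le> b"
  shows "(Max (x ` {a..b}))^2 \<le> 4 * (x a)^2 - 4 * (\<Sum>N\<in>{a..<b}. Max (x ` {Suc N..b}) * (x N - x (Suc N)))"
proof -
  define M where "M N = Max (x ` {N..b})" for N
  define F where "F N = 2 * M N * (2 * x N - M N) - 4 * (\<Sum>j\<in>{N..<b}. M (Suc j) * (x j - x (Suc j)))" for N
  have "0 \<le> F a" using assms
  proof (induction a rule: inc_induct)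
    case base
    have "M b = x b" by (simp add: M_def)
    then show ?case by (simp add: F_def)
  next
    case (step n)
    have Mn: "M n = max (x n) (M (Suc n))"
    proof -
      have "{n..b} = insert n {Suc n..b}" using step(2) by auto
      then show ?thesis using step(2) by (simp add: M_def Max_insert)
    qed
    have Fn: "F n = F (Suc n) + (4 * M n * x n - 2 * (M n)^2 + 2 * (M (Suc n))^2 - 4 * M (Suc n) * x n)"
      using step(2) by (simp add: F_def sum.atLeast_Suc_lessThan algebra_simps power2_eq_square)
    have "0 \<le> 4 * M n * x n - 2 * (M n)^2 + 2 * (M (Suc n))^2 - 4 * M (Suc n) * x n"
    proof (cases "x n \<le> M (Suc n)")
      case True then show ?thesis by (simp add: Mn max_def)
    next
      case False
      hence "M n = x n" by (simp add: Mn)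
      moreover have "0 \<le> 2 * (x n - M (Suc n))^2" by simp
      ultimately show ?thesis by (simp add: power2_eq_square algebra_simps)
    qed
    then show ?case using step.IH Fn by linarith
  qed
  moreover have "4 * (x a)^2 - 4 * (\<Sum>N\<in>{a..<b}. M (Suc N) * (x N - x (Suc N))) - (M a)^2
      = F a + (2 * x a - M a)^2"
    by (simp add: F_def power2_eq_square algebra_simps)
  moreover have "0 \<le> (2 * x a - M a)^2" by simp
  ultimately show ?thesis unfolding M_def by linarith
qed

lemma max_sq:
  fixes f :: "'i \<Rightarrow> real"
  assumes "finite A" "A \<noteq> {}" "\<And>j. j \<in> A \<Longrightarrow> 0 \<le> f j"
  shows "Max ((\<lambda>j. (f j)^2) ` A) = (Max (f ` A))^2"
proof -
  obtain j0 where j0: "j0 \<in> A" "Max (f ` A) = f j0"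
  proof -
    have "Max (f ` A) \<in> f ` A" using Max_in[of "f ` A"] assms(1,2) by simp
    then show ?thesis using that by auto
  qed
  show ?thesis
  proof (rule Max_eqI)
    show "finite ((\<lambda>j. (f j)^2) ` A)" using assms by simp
    fix y assume "y \<in> (\<lambda>j. (f j)^2) ` A"
    then obtain j where j: "j \<in> A" "y = (f j)^2" by auto
    have "f j \<le> f j0" using j0 j assms Max_ge[of "f ` A" "f j"] by auto
    then show "y \<le> (Max (f ` A))^2" using j j0 assms by (simp add: power_mono)
  next
    show "(Max (f ` A))^2 \<in> (\<lambda>j. (f j)^2) ` A" using j0 by auto
  qed
qed

lemma doob_int_nonneg:
  assumes "N < b" "b \<le> K"
  shows "0 \<le> integral {0..1} (\<lambda>x. Max ((\<lambda>j. exp (nu * TK c K j x)) ` {Suc N..b}) *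
            (exp (nu * TK c K N x) - exp (nu * TK c K (Suc N) x)))"
proof -
  have NK: "N \<le> K" using assms by simp
  define g where "g u = Max ((\<lambda>j. exp (nu * RR c K (Suc N) j u)) ` {Suc N..b}) *
       exp (nu * RR c K (Suc N) (Suc N) u)" for u
  define k where "k z = exp (nu * c N * (z - 1/2)) - 1" for z
  have cg: "continuous_on {0..1} g" unfolding g_def[abs_def]
    using assms by (intro continuous_intros cont_RR cont_Max) auto
  have ck: "continuous_on {0..1} k" unfolding k_def[abs_def]
    by (intro continuous_intros)
  have "integral {0..1} (\<lambda>x. Max ((\<lambda>j. exp (nu * TK c K j x)) ` {Suc N..b}) *
            (exp (nu * TK c K N x) - exp (nu * TK c K (Suc N) x))) =
        integral {0..1} (\<lambda>x. g (tent_iter (Suc N) x) * k (tent_iter N x))"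
  proof (intro integral_cong)
    fix x :: real
    have "(\<lambda>j. exp (nu * RR c K (Suc N) j (tent_iter (Suc N) x))) ` {Suc N..b} =
          (\<lambda>j. exp (nu * TK c K j x)) ` {Suc N..b}"
      by (intro image_cong refl) (simp add: RR_TK)
    moreover have "exp (nu * TK c K N x) - exp (nu * TK c K (Suc N) x) =
        exp (nu * TK c K (Suc N) x) * k (tent_iter N x)"
      by (simp add: k_def TK_step[OF NK] tent_star_def algebra_simps flip: exp_add)
    ultimately show "Max ((\<lambda>j. exp (nu * TK c K j x)) ` {Suc N..b}) *
            (exp (nu * TK c K N x) - exp (nu * TK c K (Suc N) x)) =
          g (tent_iter (Suc N) x) * k (tent_iter N x)"
      by (simp add: g_def RR_TK)
  qed
  also have "\<dots> = integral {0..1} (\<lambda>u. g u * ((k (u/2) + k (1 - u/2)) / 2))"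
    by (rule comb_int[OF cg ck])
  also have "0 \<le> \<dots>"
  proof (rule integral_nonneg)
    show "(\<lambda>u. g u * ((k (u/2) + k (1 - u/2)) / 2)) integrable_on {0..1}"
      by (intro integrable_continuous_interval continuous_intros cg
           continuous_on_compose2[OF ck]) auto
    fix u :: real assume u: "u \<in> {0..1}"
    define s where "s = nu * c N * (u/2 - 1/2)"
    have ks: "k (u/2) = exp s - 1" "k (1 - u/2) = exp (-s) - 1"
      by (simp_all add: k_def s_def algebra_simps)
    have "0 \<le> (k (u/2) + k (1 - u/2)) / 2"
    proof -
      have h: "1 + s \<le> exp s" "1 + (-s) \<le> exp (-s)" by (rule exp_ge_add_one_self)+
      have "0 \<le> exp s - 1 + (exp (-s) - 1)" using h by linarith
      then show ?thesis unfolding ks by simp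
    qed
    moreover have "0 \<le> g u"
    proof -
      have "exp (nu * RR c K (Suc N) b u) \<le> Max ((\<lambda>j. exp (nu * RR c K (Suc N) j u)) ` {Suc N..b})"
        using assms by (intro Max_ge) auto
      moreover have "0 < exp (nu * RR c K (Suc N) b u)" by simp
      ultimately have "0 \<le> Max ((\<lambda>j. exp (nu * RR c K (Suc N) j u)) ` {Suc N..b})" by linarith
      then show ?thesis unfolding g_def by simp
    qed
    ultimately show "0 \<le> g u * ((k (u/2) + k (1 - u/2)) / 2)" by simp
  qed
  finally show ?thesis .
qed


lemma finite_bound:
  assumes ab: "a \<le> b" and bK: "b \<le> K"
  shows "integral {0..1} (\<lambda>x. Max ((\<lambda>N. exp (mu * TK c K N x)) ` {a..b}))
         \<le> 4 * exp (mu^2/8 * (\<Sum>n\<in>{a..K}. (c n)^2))"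
proof -
  define Y where "Y N x = exp (mu/2 * TK c K N x)" for N x
  define G where "G x = (\<Sum>N\<in>{a..<b}. Max ((\<lambda>j. Y j x) ` {Suc N..b}) * (Y N x - Y (Suc N) x))" for x
  have cY: "continuous_on {0..1} (Y N)" for N
    unfolding Y_def[abs_def] by (intro continuous_intros cont_TK)
  have cG1: "continuous_on {0..1} (\<lambda>x. Max ((\<lambda>j. Y j x) ` {Suc N..b}) * (Y N x - Y (Suc N) x))"
    if "N \<in> {a..<b}" for N
    using that by (intro continuous_intros cont_Max cY) auto
  have cG: "continuous_on {0..1} G"
    unfolding G_def by (intro continuous_on_sum cG1)
  have sq: "exp (mu * t) = (exp (mu/2 * t))^2" for t :: real
    by (simp add: power2_eq_square flip: exp_add)
  have pw: "Max ((\<lambda>N. exp (mu * TK c K N x)) ` {a..b}) \<le> 4 * (Y a x)^2 - 4 * G x" for x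
  proof -
    have "Max ((\<lambda>N. exp (mu * TK c K N x)) ` {a..b}) = Max ((\<lambda>N. (Y N x)^2) ` {a..b})"
      by (simp add: Y_def sq)
    also have "\<dots> = (Max ((\<lambda>N. Y N x) ` {a..b}))^2"
      using ab by (intro max_sq) (auto simp: Y_def)
    also have "\<dots> \<le> 4 * (Y a x)^2 - 4 * G x"
      unfolding G_def using doob_path[OF ab, of "\<lambda>N. Y N x"] by simp
    finally show ?thesis .
  qed
  have "integral {0..1} (\<lambda>x. Max ((\<lambda>N. exp (mu * TK c K N x)) ` {a..b}))
        \<le> integral {0..1} (\<lambda>x. 4 * (Y a x)^2 - 4 * G x)"
  proof (rule integral_le)
    show "(\<lambda>x. Max ((\<lambda>N. exp (mu * TK c K N x)) ` {a..b})) integrable_on {0..1}"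
      using ab by (intro integrable_continuous_interval cont_Max continuous_intros cont_TK) auto
    show "(\<lambda>x. 4 * (Y a x)^2 - 4 * G x) integrable_on {0..1}"
      by (intro integrable_continuous_interval continuous_intros cY cG)
  qed (rule pw)
  also have "\<dots> = 4 * integral {0..1} (\<lambda>x. (Y a x)^2) - 4 * integral {0..1} G"
    by (subst integral_diff) (auto intro!: integrable_continuous_interval continuous_intros cY cG)
  also have "integral {0..1} G = (\<Sum>N\<in>{a..<b}. integral {0..1}
      (\<lambda>x. Max ((\<lambda>j. Y j x) ` {Suc N..b}) * (Y N x - Y (Suc N) x)))"
    unfolding G_def by (rule integral_sum) (auto intro!: integrable_continuous_interval cG1)
  also have "\<dots> \<ge> 0"
    unfolding Y_def using bK by (intro sum_nonneg doob_int_nonneg) auto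
  hence "4 * integral {0..1} (\<lambda>x. (Y a x)^2) - 4 * (\<Sum>N\<in>{a..<b}. integral {0..1}
      (\<lambda>x. Max ((\<lambda>j. Y j x) ` {Suc N..b}) * (Y N x - Y (Suc N) x)))
      \<le> 4 * integral {0..1} (\<lambda>x. (Y a x)^2)" by simp
  also have "integral {0..1} (\<lambda>x. (Y a x)^2) = integral {0..1} (\<lambda>x. exp (mu * TK c K a x))"
    by (simp add: Y_def sq)
  also have "4 * \<dots> \<le> 4 * exp (mu^2/8 * (\<Sum>n\<in>{a..K}. (c n)^2))"
    using ab bK by (intro mult_left_mono int_exp_TK) auto
  finally show ?thesis .
qed


lemma tent_star_bound: "x \<in> {0..1} \<Longrightarrow> \<bar>tent_star n x\<bar> \<le> 1/2"
  using tent_iter_range[of x n] unfolding tent_star_def by (auto simp: abs_if)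

lemma tail_split:
  assumes sc: "summable (\<lambda>n. \<bar>c n\<bar>)" and x: "x \<in> {0..1}" and NK: "N \<le> Suc K"
  shows "(\<Sum>n. c (n + N) * tent_star (n + N) x) = TK c K N x + (\<Sum>n. c (n + Suc K) * tent_star (n + Suc K) x)"
proof -
  define f where "f i = c (i + N) * tent_star (i + N) x" for i
  have sf: "summable f"
  proof (rule summable_comparison_test')
    show "summable (\<lambda>n. \<bar>c (n + N)\<bar>)" using summable_ignore_initial_segment[OF sc] .
    fix n
    have "\<bar>tent_star (n + N) x\<bar> \<le> 1" using tent_star_bound[OF x, of "n + N"] by linarith
    then show "norm (f n) \<le> \<bar>c (n + N)\<bar>"
      unfolding f_def by (simp add: abs_mult mult_left_le)
  qed
  have "suminf f = (\<Sum>n. f (n + (Suc K - N))) + (\<Sum>i<Suc K - N. f i)"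
    by (rule suminf_split_initial_segment[OF sf])
  moreover have "(\<lambda>n. f (n + (Suc K - N))) = (\<lambda>n. c (n + Suc K) * tent_star (n + Suc K) x)"
    using NK by (simp add: f_def fun_eq_iff)
  moreover have "(\<Sum>i<Suc K - N. f i) = TK c K N x"
  proof -
    have "(\<Sum>i<Suc K - N. f i) = (\<Sum>i\<in>{0..<Suc K - N}. (\<lambda>n. c n * tent_star n x) (i + N))"
      by (simp add: f_def lessThan_atLeast0)
    also have "\<dots> = (\<Sum>n\<in>{0 + N..<(Suc K - N) + N}. c n * tent_star n x)"
      by (rule sum.shift_bounds_nat_ivl[symmetric])
    also have "\<dots> = TK c K N x"
      using NK by (simp add: TK_def atLeastLessThanSuc_atLeastAtMost)
    finally show ?thesis .
  qed
  ultimately have "suminf f = TK c K N x + (\<Sum>n. c (n + Suc K) * tent_star (n + Suc K) x)"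
    by simp
  moreover have "f = (\<lambda>n. c (n + N) * tent_star (n + N) x)" by (simp add: f_def fun_eq_iff)
  ultimately show ?thesis by simp
qed

lemma tail_bound:
  assumes sc: "summable (\<lambda>n. \<bar>c n\<bar>)" and x: "x \<in> {0..1}"
  shows "\<bar>\<Sum>n. c (n + M) * tent_star (n + M) x\<bar> \<le> (\<Sum>n. \<bar>c (n + M)\<bar>)"
proof -
  have s1: "summable (\<lambda>n. \<bar>c (n + M)\<bar>)" using summable_ignore_initial_segment[OF sc] .
  have le: "\<bar>c (n + M) * tent_star (n + M) x\<bar> \<le> \<bar>c (n + M)\<bar>" for n
  proof -
    have "\<bar>tent_star (n + M) x\<bar> \<le> 1" using tent_star_bound[OF x, of "n + M"] by linarith
    then show ?thesis by (simp add: abs_mult mult_left_le)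
  qed
  have s2: "summable (\<lambda>n. \<bar>c (n + M) * tent_star (n + M) x\<bar>)"
    by (rule summable_comparison_test'[OF s1]) (use le in simp)
  have "\<bar>\<Sum>n. c (n + M) * tent_star (n + M) x\<bar> \<le> (\<Sum>n. \<bar>c (n + M) * tent_star (n + M) x\<bar>)"
    by (rule summable_rabs[OF s2])
  also have "\<dots> \<le> (\<Sum>n. \<bar>c (n + M)\<bar>)"
    by (rule suminf_le[OF le s2 s1])
  finally show ?thesis .
qed


lemma exp_abs_le: "exp ((lam::real) * \<bar>t::real\<bar>) \<le> exp (lam * t) + exp (- lam * t)"
proof (cases "t \<ge> 0")
  case True
  then have "\<bar>t\<bar> = t" by simp
  then show ?thesis using exp_gt_zero[of "- lam * t"] by simp
next
  case False
  then have "lam * \<bar>t\<bar> = - lam * t" by simp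
  then show ?thesis using exp_gt_zero[of "lam * t"] by simp
qed

theorem lemma2p7:
  fixes c :: "nat \<Rightarrow> real" and a b :: nat and lam :: real
  assumes "summable (\<lambda>n. \<bar>c n\<bar>)"
    and "1 \<le> a" and "a < b"
  shows "(LINT x:{0..1}|lborel.
            exp (lam * Max ((\<lambda>N. \<bar>\<Sum>n. c (n + N) * tent_star (n + N) x\<bar>) ` {a..b})))
         \<le> 8 * exp (lam\<^sup>2 / 2 * (\<Sum>n. (c (n + a))\<^sup>2))"
proof -
  note sc = assms(1)
  define T where "T N x = (\<Sum>n. c (n + N) * tent_star (n + N) x)" for N x
  define F where "F x = exp (lam * Max ((\<lambda>N. \<bar>T N x\<bar>) ` {a..b}))" for x
  define S2 where "S2 = (\<Sum>n. (c (n + a))\<^sup>2)"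
  define C where "C = 8 * exp (lam\<^sup>2 / 2 * S2)"
  define eps where "eps K = (\<Sum>n. \<bar>c (n + Suc K)\<bar>)" for K
  define L where "L = (LINT x:{0..1}|lborel. F x)"
  define C0 where "C0 = (\<Sum>n. \<bar>c n\<bar>)"
  have cb: "\<bar>c n\<bar> \<le> C0" for n
  proof -
    have "(\<Sum>i\<in>{n}. \<bar>c i\<bar>) \<le> C0" unfolding C0_def
      by (rule sum_le_suminf[OF sc]) auto
    then show ?thesis by simp
  qed
  have ssq: "summable (\<lambda>n. (c n)\<^sup>2)"
  proof (rule summable_comparison_test'[where g = "\<lambda>n. C0 * \<bar>c n\<bar>"])
    show "summable (\<lambda>n. C0 * \<bar>c n\<bar>)" using summable_mult[OF sc] .
    fix n
    show "norm ((c n)\<^sup>2) \<le> C0 * \<bar>c n\<bar>"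
    proof -
      have "(c n)\<^sup>2 = \<bar>c n\<bar> * \<bar>c n\<bar>" by (simp add: power2_eq_square)
      also have "\<dots> \<le> C0 * \<bar>c n\<bar>" using cb[of n] by (intro mult_right_mono) auto
      finally show ?thesis by simp
    qed
  qed
  have ssq2: "summable (\<lambda>n. (c (n + a))\<^sup>2)" using summable_ignore_initial_segment[OF ssq] .
  have S2nn: "0 \<le> S2" unfolding S2_def by (intro suminf_nonneg ssq2) auto
  have Cpos: "0 < C" by (simp add: C_def)
  have bound: "L \<le> exp (\<bar>lam\<bar> * eps K) * C" if bK: "b \<le> K" for K
  proof (cases "set_integrable lborel {0..1} F")
    case False
    hence "L = 0" unfolding L_def set_lebesgue_integral_def set_integrable_def
      by (simp add: not_integrable_integral_eq)
    then show ?thesis using Cpos by simp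
  next
    case True
    define E where "E = exp (\<bar>lam\<bar> * eps K)"
    define H where "H x = E * (Max ((\<lambda>N. exp (lam * TK c K N x)) ` {a..b}) +
                               Max ((\<lambda>N. exp ((-lam) * TK c K N x)) ` {a..b}))" for x
    have cH: "continuous_on {0..1} H"
      unfolding H_def using assms
      by (intro continuous_intros cont_Max cont_TK) auto
    have FH: "F x \<le> H x" if x: "x \<in> {0..1}" for x
    proof -
      obtain N0 where N0: "N0 \<in> {a..b}" "Max ((\<lambda>N. \<bar>T N x\<bar>) ` {a..b}) = \<bar>T N0 x\<bar>"
      proof -
        have "Max ((\<lambda>N. \<bar>T N x\<bar>) ` {a..b}) \<in> (\<lambda>N. \<bar>T N x\<bar>) ` {a..b}"
          using assms by (intro Max_in) auto
        then show ?thesis using that by auto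
      qed
      have N0K: "N0 \<le> Suc K" using N0 bK by auto
      define R where "R = (\<Sum>n. c (n + Suc K) * tent_star (n + Suc K) x)"
      have TR: "T N0 x = TK c K N0 x + R"
        unfolding T_def R_def by (rule tail_split[OF sc x N0K])
      have Rb: "\<bar>R\<bar> \<le> eps K" unfolding R_def eps_def by (rule tail_bound[OF sc x])
      have "lam * \<bar>T N0 x\<bar> \<le> lam * \<bar>TK c K N0 x\<bar> + \<bar>lam\<bar> * eps K"
      proof -
        have d: "\<bar>\<bar>T N0 x\<bar> - \<bar>TK c K N0 x\<bar>\<bar> \<le> eps K" using TR Rb by linarith
        have "lam * (\<bar>T N0 x\<bar> - \<bar>TK c K N0 x\<bar>) \<le> \<bar>lam\<bar> * \<bar>\<bar>T N0 x\<bar> - \<bar>TK c K N0 x\<bar>\<bar>"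
          by (metis abs_ge_self abs_mult)
        also have "\<dots> \<le> \<bar>lam\<bar> * eps K" using d by (intro mult_left_mono) auto
        finally show ?thesis by (simp add: algebra_simps)
      qed
      hence "F x \<le> E * exp (lam * \<bar>TK c K N0 x\<bar>)"
        unfolding F_def N0(2) E_def by (simp flip: exp_add add: add.commute)
      also have "\<dots> \<le> E * (exp (lam * TK c K N0 x) + exp (- lam * TK c K N0 x))"
        unfolding E_def by (intro mult_left_mono exp_abs_le) auto
      also have "\<dots> \<le> H x"
        unfolding H_def E_def using N0(1)
        by (intro mult_left_mono add_mono Max_ge) auto
      finally show ?thesis .
    qed
    have "L \<le> (LINT x:{0..1}|lborel. H x)"
      unfolding L_def
      by (rule set_integral_mono[OF True borel_integrable_atLeastAtMost'[OF cH] FH])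
    also have "\<dots> = integral {0..1} H"
      by (rule set_borel_integral_eq_integral(2)[OF borel_integrable_atLeastAtMost'[OF cH]])
    also have "\<dots> = E * (integral {0..1} (\<lambda>x. Max ((\<lambda>N. exp (lam * TK c K N x)) ` {a..b})) +
                         integral {0..1} (\<lambda>x. Max ((\<lambda>N. exp ((-lam) * TK c K N x)) ` {a..b})))"
    proof -
      have "integral {0..1} H = E * integral {0..1} (\<lambda>x. Max ((\<lambda>N. exp (lam * TK c K N x)) ` {a..b}) +
                               Max ((\<lambda>N. exp ((-lam) * TK c K N x)) ` {a..b}))"
        unfolding H_def by simp
      then show ?thesis using assms
        by (subst (asm) integral_add) (auto intro!: integrable_continuous_interval cont_Max continuous_intros cont_TK)
    qed
    also have "\<dots> \<le> E * (4 * exp (lam^2/8 * (\<Sum>n\<in>{a..K}. (c n)^2)) + 4 * exp ((-lam)^2/8 * (\<Sum>n\<in>{a..K}. (c n)^2)))"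
      unfolding E_def using assms bK
      by (intro mult_left_mono add_mono finite_bound) auto
    also have "\<dots> = E * (8 * exp (lam^2/8 * (\<Sum>n\<in>{a..K}. (c n)^2)))" by simp
    also have "\<dots> \<le> E * C"
    proof -
      have "(\<Sum>n\<in>{a..K}. (c n)^2) = (\<Sum>i\<in>{0..<Suc K - a}. (c (i + a))^2)"
      proof -
        have "(\<Sum>i\<in>{0..<Suc K - a}. (\<lambda>n. (c n)^2) (i + a)) = (\<Sum>n\<in>{0 + a..<(Suc K - a) + a}. (c n)^2)"
          by (rule sum.shift_bounds_nat_ivl[symmetric])
        also have "\<dots> = (\<Sum>n\<in>{a..K}. (c n)^2)"
          using assms bK by (simp add: atLeastLessThanSuc_atLeastAtMost)
        finally show ?thesis by simp
      qed
      also have "\<dots> \<le> S2" unfolding S2_def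
        by (rule sum_le_suminf[OF ssq2]) auto
      finally have X: "(\<Sum>n\<in>{a..K}. (c n)^2) \<le> S2" .
      have X0: "0 \<le> (\<Sum>n\<in>{a..K}. (c n)^2)" by (intro sum_nonneg) auto
      have "lam^2/8 * (\<Sum>n\<in>{a..K}. (c n)^2) \<le> lam^2/8 * S2"
        using X by (intro mult_left_mono) auto
      also have "\<dots> \<le> lam^2/2 * S2" using S2nn by (intro mult_right_mono) auto
      finally show ?thesis unfolding C_def E_def by (intro mult_left_mono) auto
    qed
    finally show ?thesis unfolding E_def .
  qed
  have "(\<lambda>K. eps K) \<longlonglongrightarrow> 0"
  proof -
    have "(\<lambda>n. \<Sum>i. \<bar>c (i + n)\<bar>) \<longlonglongrightarrow> 0"
    proof (rule LIMSEQ_I)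
      fix r :: real assume "0 < r"
      from suminf_exist_split[OF this sc] obtain N0 where "\<forall>n\<ge>N0. norm (\<Sum>i. \<bar>c (i + n)\<bar>) < r" by blast
      then show "\<exists>no. \<forall>n\<ge>no. norm ((\<Sum>i. \<bar>c (i + n)\<bar>) - 0) < r" by auto
    qed
    from LIMSEQ_Suc[OF this] show ?thesis unfolding eps_def by simp
  qed
  hence "(\<lambda>K. exp (\<bar>lam\<bar> * eps K) * C) \<longlonglongrightarrow> exp (\<bar>lam\<bar> * 0) * C"
    by (intro tendsto_intros)
  hence lim: "(\<lambda>K. exp (\<bar>lam\<bar> * eps K) * C) \<longlonglongrightarrow> C" by simp
  have "L \<le> C"
    by (rule LIMSEQ_le_const[OF lim]) (use bound in auto)
  then show ?thesis unfolding L_def F_def T_def C_def S2_def .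
qed

end
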